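(* For $\mathfrak{g}=\mathfrak{sl}_2(\mathbb{C})$ we have $\operatorname{QDer}(\mathfrak{g})=\operatorname{End}(\mathfrak{g})$; that is, for every linear map $\phi:\mathfrak{g}\to\mathfrak{g}$ there is a linear map $\tau:\mathfrak{g}\to\mathfrak{g}$ with $\tau([x,y])=[\phi(x),y]+[x,\phi(y)]$ for all $x,y\in\mathfrak{g}$.
   Context: The space of quasiderivations of a Lie algebra $\mathfrak{g}$ is $\operatorname{QDer}(\mathfrak{g})=\{\phi\in\operatorname{End}(\mathfrak{g})\mid\exists\,\tau\in\operatorname{End}(\mathfrak{g})\text{ with }\tau([x,y])=[\phi(x),y]+[x,\phi(y)]\ \forall x,y\in\mathfrak{g}\}$. *)

theory Defs
  imports "HOL-Analysis.Analysis"
begin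

definition tr2 :: "complex^2^2 \<Rightarrow> complex" where
  "tr2 A = A $ 1 $ 1 + A $ 2 $ 2"

definition sl2 :: "(complex^2^2) set" where
  "sl2 = {A. tr2 A = 0}"

definition lie_br :: "complex^2^2 \<Rightarrow> complex^2^2 \<Rightarrow> complex^2^2" where
  "lie_br A B = A ** B - B ** A"

definition msc :: "complex \<Rightarrow> complex^2^2 \<Rightarrow> complex^2^2" where
  "msc c A = (\<chi> i j. c * A $ i $ j)"

text \<open>A complex-linear endomorphism of sl2 (values outside sl2 are irrelevant).\<close>
definition sl2_End :: "(complex^2^2 \<Rightarrow> complex^2^2) \<Rightarrow> bool" where
  "sl2_End f \<longleftrightarrow> (\<forall>x\<in>sl2. f x \<in> sl2) \<and>
     (\<forall>x\<in>sl2. \<forall>y\<in>sl2. f (x + y) = f x + f y) \<and>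
     (\<forall>c::complex. \<forall>x\<in>sl2. f (msc c x) = msc c (f x))"

end

theory Submission
  imports Defs
begin

definition mk :: "complex \<Rightarrow> complex \<Rightarrow> complex \<Rightarrow> complex \<Rightarrow> complex^2^2" where
  "mk a b c d = (\<chi> i j. if i = 1 then (if j = 1 then a else b) else (if j = 1 then c else d))"

definition hH :: "complex^2^2" where "hH = mk 1 0 0 (-1)"
definition eE :: "complex^2^2" where "eE = mk 0 1 0 0"
definition fF :: "complex^2^2" where "fF = mk 0 0 1 0"

lemma mk_nth[simp]: "mk a b c d $ 1 $ 1 = a" "mk a b c d $ 1 $ 2 = b"
  "mk a b c d $ 2 $ 1 = c" "mk a b c d $ 2 $ 2 = d"
  by (simp_all add: mk_def)

lemma decomp: "x \<in> sl2 \<Longrightarrow> x = msc (x$1$1) hH + msc (x$1$2) eE + msc (x$2$1) fF"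
  unfolding sl2_def tr2_def hH_def eE_def fF_def msc_def
  by (auto simp: vec_eq_iff forall_2 algebra_simps) (metis add.commute add_eq_0_iff)

lemma basis_sl2: "msc c hH \<in> sl2" "msc c eE \<in> sl2" "msc c fF \<in> sl2"
  by (simp_all add: sl2_def tr2_def msc_def hH_def eE_def fF_def)

lemma add_sl2: "a \<in> sl2 \<Longrightarrow> b \<in> sl2 \<Longrightarrow> a + b \<in> sl2"
  by (simp add: sl2_def tr2_def algebra_simps)

lemma phi_decomp:
  assumes "sl2_End \<phi>" "x \<in> sl2"
  shows "\<phi> x = msc (x$1$1) (\<phi> hH) + msc (x$1$2) (\<phi> eE) + msc (x$2$1) (\<phi> fF)"
proof -
  have L: "\<And>a b. a \<in> sl2 \<Longrightarrow> b \<in> sl2 \<Longrightarrow> \<phi> (a+b) = \<phi> a + \<phi> b"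
    and S: "\<And>c a. a \<in> sl2 \<Longrightarrow> \<phi> (msc c a) = msc c (\<phi> a)"
    using assms(1) unfolding sl2_End_def by auto
  have h: "hH \<in> sl2" "eE \<in> sl2" "fF \<in> sl2"
    by (simp_all add: sl2_def tr2_def hH_def eE_def fF_def)
  have "\<phi> x = \<phi> (msc (x$1$1) hH + msc (x$1$2) eE + msc (x$2$1) fF)"
    using decomp[OF assms(2)] by simp
  also have "\<dots> = msc (x$1$1) (\<phi> hH) + msc (x$1$2) (\<phi> eE) + msc (x$2$1) (\<phi> fF)"
    by (simp add: L S h basis_sl2 add_sl2)
  finally show ?thesis .
qed

lemma lie_sl2: "lie_br a b \<in> sl2"
  by (simp add: sl2_def tr2_def lie_br_def matrix_matrix_mult_def sum_2)

lemma msc_sl2: "a \<in> sl2 \<Longrightarrow> msc c a \<in> sl2"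
  by (simp add: sl2_def tr2_def msc_def algebra_simps flip: distrib_left)

theorem proposition5p10:
  fixes \<phi> :: "complex^2^2 \<Rightarrow> complex^2^2"
  assumes "sl2_End \<phi>"
  shows "\<exists>\<tau>. sl2_End \<tau> \<and>
           (\<forall>x\<in>sl2. \<forall>y\<in>sl2. \<tau> (lie_br x y) = lie_br (\<phi> x) y + lie_br x (\<phi> y))"
proof -
  define D where "D = (\<lambda>x y. lie_br (\<phi> x) y + lie_br x (\<phi> y))"
  define \<tau> where "\<tau> = (\<lambda>z::complex^2^2. msc (z$1$1) (D eE fF) + msc (z$1$2 / 2) (D hH eE) + msc (- (z$2$1 / 2)) (D hH fF))"
  have DS: "D a b \<in> sl2" for a b
    unfolding D_def by (rule add_sl2; rule lie_sl2)
  have "sl2_End \<tau>"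
    unfolding sl2_End_def
  proof (intro conjI ballI allI)
    fix x assume "x \<in> sl2" show "\<tau> x \<in> sl2"
      unfolding \<tau>_def by (intro add_sl2 msc_sl2 DS)
  next
    fix x y :: "complex^2^2"
    show "\<tau> (x + y) = \<tau> x + \<tau> y"
      unfolding \<tau>_def by (simp add: msc_def vec_eq_iff algebra_simps add_divide_distrib)
  next
    fix c and x :: "complex^2^2"
    show "\<tau> (msc c x) = msc c (\<tau> x)"
      unfolding \<tau>_def by (simp add: msc_def vec_eq_iff algebra_simps)
  qed
  moreover have "\<tau> (lie_br x y) = D x y" if x: "x \<in> sl2" and y: "y \<in> sl2" for x y
  proof -
    have x22: "x$2$2 = - x$1$1" and y22: "y$2$2 = - y$1$1"
      using x y by (auto simp: sl2_def tr2_def eq_neg_iff_add_eq_0 add.commute)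
    have "\<phi> hH \<in> sl2" "\<phi> eE \<in> sl2" "\<phi> fF \<in> sl2"
      using assms unfolding sl2_End_def by (auto simp: sl2_def tr2_def hH_def eE_def fF_def)
    hence P22: "\<phi> hH $2$2 = - \<phi> hH $1$1" and Q22: "\<phi> eE $2$2 = - \<phi> eE $1$1"
      and R22: "\<phi> fF $2$2 = - \<phi> fF $1$1"
      by (auto simp: sl2_def tr2_def eq_neg_iff_add_eq_0 add.commute)
    show ?thesis
      unfolding \<tau>_def D_def phi_decomp[OF assms x] phi_decomp[OF assms y]
      apply (simp add: vec_eq_iff forall_2 lie_br_def matrix_matrix_mult_def sum_2 msc_def
          x22 y22, simp add: hH_def eE_def fF_def)
      apply (simp add: field_simps P22 Q22 R22)
      done
  qed
  ultimately show ?thesis unfolding D_def by blast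
qed

end
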